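(* For a set of languages $\mathcal{R}$ let $\dot{\mathcal{R}}^\star=\{L^\star\mid L\in\mathcal{R}\}$. (1) There exists a rational set of regular languages $\mathcal{R}$ such that $\dot{\mathcal{R}}^\star$ is not a rational set of regular languages. (2) If $\mathcal{R}$ is a finite rational set of regular languages, then $\dot{\mathcal{R}}^\star$ is a finite rational set of regular languages. (3) Expressing $\dot{\mathcal{R}}^\star$ in the finite case in general requires a new language substitution: there exist an alphabet $\Delta$, a regular language substitution $\varphi:\Delta\to2^{\Sigma^*}$ and a regular $K\subseteq\Delta^+$ with $\mathcal{R}=(K,\varphi)$ finite, such that there is no regular $K'\subseteq\Delta^+$ with $\dot{\mathcal{R}}^\star=(K',\varphi)$.
   Context: Alphabets are nonempty finite sets. A regular language substitution $\varphi:\Delta\to2^{\Sigma^*}$ maps each symbol to a regular language over $\Sigma$, extended by $\varphi(\delta w)=\varphi(\delta)\varphi(w)$. A set $\mathcal{R}$ of regular languages over $\Sigma$ is a rational set of regular languages, written $\mathcal{R}=(K,\varphi)$, if there are an alphabet $\Delta$, a regular $K\subseteq\Delta^+$ and a regular language substitution $\varphi$ with $\mathcal{R}=\{\varphi(w)\mid w\in K\}$. *)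

theory Defs
  imports Main
begin

text \<open>Words over an alphabet are lists; a word w lies in Sigma^* iff set w is a subset of Sigma.
An alphabet is a nonempty finite set of symbols.\<close>

definition alphabet :: "'a set \<Rightarrow> bool" where
  "alphabet S \<longleftrightarrow> finite S \<and> S \<noteq> {}"

definition conc :: "'a list set \<Rightarrow> 'a list set \<Rightarrow> 'a list set" where
  "conc A B = {u @ v | u v. u \<in> A \<and> v \<in> B}"

fun lpow :: "'a list set \<Rightarrow> nat \<Rightarrow> 'a list set" where
  "lpow A 0 = {[]}"
| "lpow A (Suc n) = conc A (lpow A n)"

definition lstar :: "'a list set \<Rightarrow> 'a list set" where
  "lstar A = (\<Union>n. lpow A n)"

datatype 'a rexp = Zero | One | Atom 'a | Plus "'a rexp" "'a rexp"
  | Times "'a rexp" "'a rexp" | Star "'a rexp"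

fun lang :: "'a rexp \<Rightarrow> 'a list set" where
  "lang Zero = {}"
| "lang One = {[]}"
| "lang (Atom a) = {[a]}"
| "lang (Plus r s) = lang r \<union> lang s"
| "lang (Times r s) = conc (lang r) (lang s)"
| "lang (Star r) = lstar (lang r)"

fun atoms :: "'a rexp \<Rightarrow> 'a set" where
  "atoms Zero = {}"
| "atoms One = {}"
| "atoms (Atom a) = {a}"
| "atoms (Plus r s) = atoms r \<union> atoms s"
| "atoms (Times r s) = atoms r \<union> atoms s"
| "atoms (Star r) = atoms r"

definition regular :: "'a set \<Rightarrow> 'a list set \<Rightarrow> bool" where
  "regular S L \<longleftrightarrow> (\<exists>r. atoms r \<subseteq> S \<and> lang r = L)"

definition plus_words :: "'d set \<Rightarrow> 'd list set" where
  "plus_words D = {w. w \<noteq> [] \<and> set w \<subseteq> D}"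

definition subst :: "('d \<Rightarrow> 'a list set) \<Rightarrow> 'd list \<Rightarrow> 'a list set" where
  "subst phi w = foldr (\<lambda>d A. conc (phi d) A) w {[]}"

definition reg_subst :: "'d set \<Rightarrow> 'a set \<Rightarrow> ('d \<Rightarrow> 'a list set) \<Rightarrow> bool" where
  "reg_subst D S phi \<longleftrightarrow> (\<forall>d\<in>D. regular S (phi d))"

definition ratset :: "'d list set \<Rightarrow> ('d \<Rightarrow> 'a list set) \<Rightarrow> 'a list set set" where
  "ratset K phi = subst phi ` K"

text \<open>Rational set of regular languages over S. The alphabet Delta is taken to be a
finite nonempty set of natural numbers (every finite alphabet is in bijection with such).\<close>
definition rational_set :: "'a set \<Rightarrow> 'a list set set \<Rightarrow> bool" where
  "rational_set S R \<longleftrightarrow>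
     (\<exists>(D::nat set) K phi. alphabet D \<and> regular D K \<and> K \<subseteq> plus_words D
        \<and> reg_subst D S phi \<and> R = ratset K phi)"

end

theory Submission imports Defs begin

lemma subst_Nil[simp]: "subst phi [] = {[]}" by (simp add: subst_def)
lemma subst_Cons[simp]: "subst phi (d#w) = conc (phi d) (subst phi w)" by (simp add: subst_def)

lemma lpow_rep: "lpow {replicate n (0::nat)} k = {replicate (n*k) 0}"
  by (induction k) (auto simp: conc_def replicate_add[symmetric])

definition M :: "nat \<Rightarrow> nat list set" where "M n = {w. set w \<subseteq> {0} \<and> n dvd length w}"

lemma lstar_rep: "lstar {replicate n (0::nat)} = M n"
proof
  show "lstar {replicate n 0} \<subseteq> M n" unfolding lstar_def lpow_rep M_def by auto
  show "M n \<subseteq> lstar {replicate n 0}"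
  proof
    fix w assume "w \<in> M n"
    then obtain k where k: "length w = n*k" and s: "set w \<subseteq> {0}" unfolding M_def by auto
    have "w = replicate (length w) 0" using s by (metis replicate_length_same singletonD subsetD)
    then have "w = replicate (n*k) 0" using k by simp
    then show "w \<in> lstar {replicate n 0}" unfolding lstar_def lpow_rep by auto
  qed
qed

lemma M_conc: "x \<in> M n \<Longrightarrow> y \<in> M n \<Longrightarrow> x @ y \<in> M n"
  unfolding M_def by auto

lemma subst_sub: "\<forall>d\<in>set w. phi d \<subseteq> M n \<Longrightarrow> subst phi w \<subseteq> M n"
proof (induction w)
  case Nil then show ?case by (simp add: M_def)
next
  case (Cons d w) then show ?case by (auto simp: conc_def intro!: M_conc)
qed

lemma key: "\<forall>d\<in>set w. phi d \<subseteq> M n \<Longrightarrow> u \<in> subst phi w \<Longrightarrow> length u = n \<Longrightarrow> n > 0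
  \<Longrightarrow> \<exists>d\<in>set w. u \<in> phi d"
proof (induction w arbitrary: u)
  case Nil then show ?case by auto
next
  case (Cons d w)
  from Cons.prems(2) obtain x y where u: "u = x @ y" and x: "x \<in> phi d" and y: "y \<in> subst phi w"
    by (auto simp: conc_def)
  have xM: "x \<in> M n" using x Cons.prems(1) by auto
  have yM: "y \<in> M n" using y subst_sub[of w phi n] Cons.prems(1) by auto
  have dx: "n dvd length x" and dy: "n dvd length y" using xM yM by (auto simp: M_def)
  have len: "length x + length y = n" using u Cons.prems(3) by simp
  show ?case
  proof (cases "length x = 0")
    case True
    then have "u = y" using u by simp
    then show ?thesis using Cons.IH[of y] Cons.prems y by auto
  next
    case False
    then have "length x \<ge> n" using dx by (simp add: dvd_imp_le)
    then have "y = []" using len by (cases y) auto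
    then show ?thesis using u x by auto
  qed
qed

lemma nil_subst: "[] \<in> subst phi w \<Longrightarrow> d \<in> set w \<Longrightarrow> [] \<in> phi d"
  by (induction w) (auto simp: conc_def)

lemma factor_sub: "[] \<in> subst phi w \<Longrightarrow> d \<in> set w \<Longrightarrow> phi d \<subseteq> subst phi w"
proof (induction w)
  case Nil then show ?case by simp
next
  case (Cons e w)
  have e: "[] \<in> phi e" and w: "[] \<in> subst phi w" using Cons.prems(1) by (auto simp: conc_def)
  show ?case
  proof (cases "d = e")
    case True
    show ?thesis
    proof
      fix x assume "x \<in> phi d"
      then have "x @ [] \<in> conc (phi e) (subst phi w)" using True w unfolding conc_def by blast
      then show "x \<in> subst phi (e#w)" by simp
    qed
  next
    case False
    then have "d \<in> set w" using Cons.prems by simp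
    then have sub: "phi d \<subseteq> subst phi w" using Cons.IH w by blast
    show ?thesis
    proof
      fix x assume "x \<in> phi d"
      then have "[] @ x \<in> conc (phi e) (subst phi w)" using sub e unfolding conc_def by blast
      then show "x \<in> subst phi (e#w)" by simp
    qed
  qed
qed

lemma subst_one: "subst (\<lambda>_. {[0::nat]}) w = {replicate (length w) 0}"
  by (induction w) (auto simp: conc_def)

lemma part1: "\<exists>(S::nat set) R. alphabet S \<and> rational_set S R \<and> \<not> rational_set S (lstar ` R)"
proof -
  define phi where "phi = (\<lambda>_::nat. {[0::nat]})"
  define K where "K = plus_words {0::nat}"
  define R where "R = ratset K phi"
  have alph: "alphabet {0::nat}" by (simp add: alphabet_def)
  have l1: "lstar {[0::nat]} = M 1" using lstar_rep[of 1] by simp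
  have "lang (Times (Atom (0::nat)) (Star (Atom 0))) = K"
  proof -
    have "lang (Times (Atom (0::nat)) (Star (Atom 0))) = conc {[0]} (M 1)" using l1 by simp
    also have "\<dots> = K"
    proof
      show "conc {[0]} (M 1) \<subseteq> K" by (auto simp: conc_def M_def K_def plus_words_def)
      show "K \<subseteq> conc {[0]} (M 1)"
      proof
        fix w assume "w \<in> K"
        then obtain a v where "w = a # v" "set w \<subseteq> {0}" by (auto simp: K_def plus_words_def neq_Nil_conv)
        then show "w \<in> conc {[0]} (M 1)" by (auto simp: conc_def M_def)
      qed
    qed
    finally show ?thesis .
  qed
  then have regK: "regular {0} K" unfolding regular_def by (intro exI[of _ "Times (Atom 0) (Star (Atom 0))"]) auto
  have rs: "rational_set {0} R"
    unfolding rational_set_def R_def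
    apply (rule exI[of _ "{0}"], rule exI[of _ K], rule exI[of _ phi])
    using alph regK
    by (auto simp: K_def reg_subst_def phi_def regular_def intro!: exI[of _ "Atom 0"])
  have nr: "\<not> rational_set {0} (lstar ` R)"
  proof
    assume "rational_set {0} (lstar ` R)"
    then obtain D' K' phi' where D': "alphabet (D'::nat set)" and K': "K' \<subseteq> plus_words D'"
      and eq: "lstar ` R = ratset K' phi'" unfolding rational_set_def by blast
    have ex: "\<exists>d\<in>D'. replicate n 0 \<in> phi' d \<and> phi' d \<subseteq> M n" if n: "n > 0" for n
    proof -
      have "replicate n 0 \<in> K" using n by (auto simp: K_def plus_words_def)
      then have "{replicate n 0} \<in> R" unfolding R_def ratset_def phi_def
        using subst_one[of "replicate n 0"] by (metis image_eqI length_replicate)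
      then have "M n \<in> lstar ` R" using lstar_rep[of n] by (metis image_eqI)
      then obtain w where w: "w \<in> K'" and sw: "subst phi' w = M n" using eq unfolding ratset_def by auto
      have nil: "[] \<in> M n" by (simp add: M_def)
      have sub: "\<forall>d\<in>set w. phi' d \<subseteq> M n" using factor_sub[of phi' w] nil sw by auto
      have "replicate n 0 \<in> subst phi' w" using sw by (auto simp: M_def)
      then obtain d where d: "d \<in> set w" "replicate n 0 \<in> phi' d" using key[OF sub _ _ n, of "replicate n 0"] by auto
      have "d \<in> D'" using d w K' by (auto simp: plus_words_def)
      then show ?thesis using d sub by auto
    qed
    then obtain f where f: "\<And>n. n > 0 \<Longrightarrow> f n \<in> D' \<and> replicate n 0 \<in> phi' (f n) \<and> phi' (f n) \<subseteq> M n"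
      by metis
    have inj: "inj_on f {n. n > 0}"
    proof (rule inj_onI)
      fix n m assume n: "n \<in> {n. n > 0}" and m: "m \<in> {n. n > 0}" and e: "f n = f m"
      have "replicate n 0 \<in> M m" using f[of n] f[of m] n m e by auto
      then have "m dvd n" by (simp add: M_def)
      moreover have "replicate m 0 \<in> M n" using f[of n] f[of m] n m e by auto
      then have "n dvd m" by (simp add: M_def)
      ultimately show "n = m" by (simp add: dvd_antisym)
    qed
    have "f ` {n. n > 0} \<subseteq> D'" using f by auto
    then have "finite (f ` {n. n > 0})" using D' by (meson alphabet_def finite_subset)
    then have "finite {n::nat. n > 0}" using inj finite_imageD by blast
    moreover have "infinite {n::nat. n > 0}"
    proof
      assume "finite {n::nat. n > 0}"
      then obtain m where "\<forall>x\<in>{n::nat. n > 0}. x < m" using finite_nat_set_iff_bounded by blast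
      then show False by (metis mem_Collect_eq less_irrefl zero_less_Suc less_SucI)
    qed
    ultimately show False by blast
  qed
  show ?thesis using alph rs nr by blast
qed

lemma part3: "\<exists>(S::nat set) (D::nat set) phi K.
          alphabet S \<and> alphabet D \<and> reg_subst D S phi \<and> regular D K \<and> K \<subseteq> plus_words D
          \<and> finite (ratset K phi)
          \<and> \<not> (\<exists>K'. regular D K' \<and> K' \<subseteq> plus_words D
                  \<and> lstar ` (ratset K phi) = ratset K' phi)"
proof -
  define phi where "phi = (\<lambda>_::nat. {[0::nat]})"
  define K where "K = {[0::nat]}"
  have alph: "alphabet {0::nat}" by (simp add: alphabet_def)
  have rs: "reg_subst {0} {0} phi" by (auto simp: reg_subst_def phi_def regular_def intro!: exI[of _ "Atom 0"])
  have rK: "regular {0} K" by (auto simp: K_def regular_def intro!: exI[of _ "Atom 0"])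
  have Kp: "K \<subseteq> plus_words {0}" by (simp add: K_def plus_words_def)
  have fin: "finite (ratset K phi)" by (simp add: K_def ratset_def)
  have no: "\<not> (\<exists>K'. regular {0} K' \<and> K' \<subseteq> plus_words {0} \<and> lstar ` (ratset K phi) = ratset K' phi)"
  proof
    assume "\<exists>K'. regular {0} K' \<and> K' \<subseteq> plus_words {0} \<and> lstar ` (ratset K phi) = ratset K' phi"
    then obtain K' where K': "K' \<subseteq> plus_words {0}" and eq: "lstar ` (ratset K phi) = ratset K' phi" by blast
    have "lstar {[0]} \<in> lstar ` (ratset K phi)" by (simp add: K_def ratset_def phi_def conc_def)
    then obtain w where w: "w \<in> K'" and sw: "subst phi w = lstar {[0]}" using eq unfolding ratset_def by auto
    have "[] \<in> lstar {[0::nat]}" by (auto simp: lstar_def intro!: exI[of _ 0])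
    moreover have "w \<noteq> []" using w K' by (auto simp: plus_words_def)
    then have "[] \<notin> subst phi w" by (simp add: subst_one phi_def)
    ultimately show False using sw by simp
  qed
  show ?thesis using alph rs rK Kp fin no by blast
qed

lemma regular_subst: "\<forall>d\<in>set w. regular S (phi d) \<Longrightarrow> regular S (subst phi w)"
proof (induction w)
  case Nil then show ?case by (auto simp: regular_def intro!: exI[of _ One])
next
  case (Cons d w)
  then obtain r s where "atoms r \<subseteq> S" "lang r = phi d" "atoms s \<subseteq> S" "lang s = subst phi w"
    unfolding regular_def by auto
  then show ?case unfolding regular_def by (intro exI[of _ "Times r s"]) auto
qed

fun rx :: "nat \<Rightarrow> nat rexp" where
  "rx 0 = Zero"
| "rx (Suc k) = Plus (rx k) (Atom k)"

lemma lang_rx: "lang (rx k) = {[i] | i. i < k}"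
  by (induction k) (auto simp: less_Suc_eq)

lemma atoms_rx: "atoms (rx k) \<subseteq> {..<k}"
  by (induction k) auto

lemma part2: "alphabet (S::'a set) \<Longrightarrow> rational_set S R \<Longrightarrow> finite R \<Longrightarrow>
          finite (lstar ` R) \<and> rational_set S (lstar ` R)"
proof -
  assume S: "alphabet S" and rat: "rational_set S R" and fin: "finite R"
  have regR: "regular S L" if L: "L \<in> R" for L
  proof -
    obtain D K phi where "K \<subseteq> plus_words (D::nat set)" "reg_subst D S phi" "R = ratset K phi"
      using rat unfolding rational_set_def by blast
    then obtain w where "w \<in> K" "L = subst phi w" "set w \<subseteq> D" using L
      by (auto simp: ratset_def plus_words_def)
    then show ?thesis using regular_subst[of w S phi] \<open>reg_subst D S phi\<close> by (auto simp: reg_subst_def)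
  qed
  obtain ls where ls: "set ls = R" using fin finite_list by blast
  define m where "m = length ls"
  define D where "D = {0..m}"
  define K where "K = {[i] | i. i < m}"
  define phi where "phi = (\<lambda>i. if i < m then lstar (ls ! i) else {[]})"
  have aD: "alphabet D" by (simp add: D_def alphabet_def)
  have rK: "regular D K" unfolding regular_def K_def
    using lang_rx[of m] atoms_rx[of m] by (intro exI[of _ "rx m"]) (auto simp: D_def)
  have Kp: "K \<subseteq> plus_words D" by (auto simp: K_def D_def plus_words_def)
  have rs: "reg_subst D S phi"
    unfolding reg_subst_def
  proof
    fix d assume "d \<in> D"
    show "regular S (phi d)"
    proof (cases "d < m")
      case True
      then have "ls ! d \<in> R" using ls m_def by auto
      then obtain r where "atoms r \<subseteq> S" "lang r = ls ! d" using regR unfolding regular_def by blast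
      then show ?thesis using True unfolding regular_def phi_def by (intro exI[of _ "Star r"]) auto
    next
      case False
      then show ?thesis unfolding regular_def phi_def by (intro exI[of _ One]) auto
    qed
  qed
  have s1: "subst phi [i] = phi i" for i by (simp add: conc_def)
  have "ratset K phi = lstar ` R"
  proof -
    have "ratset K phi = (\<lambda>i. phi i) ` {..<m}" unfolding ratset_def K_def using s1 by force
    also have "\<dots> = (\<lambda>i. lstar (ls ! i)) ` {..<m}" unfolding phi_def by auto
    also have "\<dots> = lstar ` ((!) ls ` {..<m})" by (simp add: image_image)
    also have "(!) ls ` {..<m} = R" using ls m_def by (metis atLeast_upt image_set map_nth set_map)
    finally show ?thesis by simp
  qed
  then have "rational_set S (lstar ` R)" unfolding rational_set_def
    using aD rK Kp rs by blast
  then show ?thesis using fin by simp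
qed

theorem proposition2:
  shows "(\<exists>(S::nat set) R. alphabet S \<and> rational_set S R \<and> \<not> rational_set S (lstar ` R))
    \<and> (\<forall>(S::'a set) R. alphabet S \<longrightarrow> rational_set S R \<longrightarrow> finite R \<longrightarrow>
          finite (lstar ` R) \<and> rational_set S (lstar ` R))
    \<and> (\<exists>(S::nat set) (D::nat set) phi K.
          alphabet S \<and> alphabet D \<and> reg_subst D S phi \<and> regular D K \<and> K \<subseteq> plus_words D
          \<and> finite (ratset K phi)
          \<and> \<not> (\<exists>K'. regular D K' \<and> K' \<subseteq> plus_words D
                  \<and> lstar ` (ratset K phi) = ratset K' phi))"
  using part1 part2 part3 by blast

end
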